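(* There is no $\alpha\ge1$ such that $(\overline{\chi_f})_\alpha\in\Delta(\mathcal{A},\le)$; that is, the fractional clique cover number $\overline{\chi_f}$ does not extend to an element of $\Delta(\mathcal{A},\le)$.
   Context: The fractional clique cover number is $\overline{\chi_f}(G)=\chi_f(\overline{G})$, the fractional chromatic number of the complement; it belongs to $\Delta(\mathcal{G},\le)$. Graphs are finite simple undirected; $x\simeq x'$ means equal or adjacent. Strong product $G\boxtimes H$: vertex set $V(G)\times V(H)$, $(g,h)\simeq(g',h')$ iff $g\simeq g'$ and $h\simeq h'$. $H\le G$ for graphs means there is a homomorphism from $\overline{H}$ to $\overline{G}$. $\Delta(\mathcal{G},\le)$ is the set of maps $f$ from graphs to $\mathbb{R}_{\ge0}$ with $f(\text{empty})=0$, $f(K_1)=1$, additive under disjoint union, multiplicative under $\boxtimes$, and monotone under $\le$. A noncommutative graph is a subspace $S\subseteq B(\mathcal{H})$ ($\mathcal{H}$ finite-dimensional) with $I\in S$, $S^*=S$. A cohomomorphism from $T\subseteq B(\mathcal{K})$ to $S\subseteq B(\mathcal{H})$ is a finite family of linear maps $E_i:\mathcal{K}\to\mathcal{H}$ with $\sum_iE_i^*E_i=I$ and $E_i^*SE_j\subseteq T$ for all $i,j$; $T\le S$ if one exists. $\widehat{G}=\operatorname{span}\{|x\rangle\langle x'|:x\simeq x'\}\subseteq B(\mathbb{C}^{V(G)})$, $\mathcal{C}_d=\mathbb{C}I\subseteq B(\mathbb{C}^d)$. $\mathcal{A}$ is the semiring (under $\oplus,\otimes$, up to unitary isomorphism)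 generated by all $\widehat{G}$ and $\mathcal{C}_d$; its elements have the form $\bigoplus_{d=1}^r\widehat{G_d}\otimes\mathcal{C}_d$. For $f\in\Delta(\mathcal{G},\le)$, $\alpha\ge1$, $f_\alpha(\bigoplus_{d}\widehat{G_d}\otimes\mathcal{C}_d)=\sum_d f(G_d)d^\alpha$. $\Delta(\mathcal{A},\le)$ is the set of $\le$-monotone semiring homomorphisms $\mathcal{A}\to\mathbb{R}_{\ge0}$. *)

theory Defs
  imports "HOL-Analysis.Analysis" "Jordan_Normal_Form.Schur_Decomposition"
begin

text \<open>A graph is a pair (n, E): vertex set {0..<n}, adjacency E (symmetric, irreflexive,
  false outside the vertex set).\<close>
type_synonym graph = "nat \<times> (nat \<Rightarrow> nat \<Rightarrow> bool)"

definition wf_graph :: "graph \<Rightarrow> bool" where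
  "wf_graph G = (case G of (n, E) \<Rightarrow>
     (\<forall>i j. E i j \<longrightarrow> i < n \<and> j < n \<and> i \<noteq> j) \<and> (\<forall>i j. E i j \<longrightarrow> E j i))"

definition gsim :: "graph \<Rightarrow> nat \<Rightarrow> nat \<Rightarrow> bool" where
  "gsim G i j = (i = j \<or> snd G i j)"

definition gcompl :: "graph \<Rightarrow> graph" where
  "gcompl G = (case G of (n, E) \<Rightarrow> (n, \<lambda>i j. i < n \<and> j < n \<and> i \<noteq> j \<and> \<not> E i j))"

text \<open>Strong product; vertex (i,k) is encoded as i*m+k.\<close>
definition strong_prod :: "graph \<Rightarrow> graph \<Rightarrow> graph" where
  "strong_prod G H = (case G of (n, E) \<Rightarrow> case H of (m, F) \<Rightarrow>
     (n * m, \<lambda>v w. v < n * m \<and> w < n * m \<and> v \<noteq> w \<and>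
        gsim G (v div m) (w div m) \<and> gsim H (v mod m) (w mod m)))"

definition K1 :: graph where "K1 = (1, \<lambda>_ _. False)"

definition indep_sets :: "graph \<Rightarrow> nat set set" where
  "indep_sets G = {I. I \<subseteq> {..<fst G} \<and> (\<forall>i\<in>I. \<forall>j\<in>I. \<not> snd G i j)}"

definition frac_chromatic :: "graph \<Rightarrow> real" where
  "frac_chromatic G = Inf {(\<Sum>I\<in>indep_sets G. w I) | w.
      (\<forall>I. 0 \<le> w I) \<and> (\<forall>v < fst G. 1 \<le> (\<Sum>I\<in>{I\<in>indep_sets G. v \<in> I}. w I))}"

definition frac_clique_cover :: "graph \<Rightarrow> real" where
  "frac_clique_cover G = frac_chromatic (gcompl G)"

type_synonym ncgraph = "nat \<times> complex mat set"

definition mat_sum_list :: "nat \<Rightarrow> complex mat list \<Rightarrow> complex mat" where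
  "mat_sum_list m Ms = foldr (+) Ms (0\<^sub>m m m)"

text \<open>T \<le> S: existence of a cohomomorphism from T to S.\<close>
definition nc_le :: "ncgraph \<Rightarrow> ncgraph \<Rightarrow> bool" where
  "nc_le T S = (case T of (m, Tm) \<Rightarrow> case S of (n, Sm) \<Rightarrow>
     (\<exists>Es :: complex mat list.
        (\<forall>E\<in>set Es. E \<in> carrier_mat n m) \<and>
        mat_sum_list m (map (\<lambda>E. mat_adjoint E * E) Es) = 1\<^sub>m m \<and>
        (\<forall>E\<in>set Es. \<forall>E'\<in>set Es. \<forall>X\<in>Sm. mat_adjoint E * X * E' \<in> Tm)))"

text \<open>\<open>\<widehat>G\<close> = span of |x><x'| with x \<simeq> x'.\<close>
definition graph_nc :: "graph \<Rightarrow> complex mat set" where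
  "graph_nc G = {A \<in> carrier_mat (fst G) (fst G).
      \<forall>i < fst G. \<forall>j < fst G. \<not> gsim G i j \<longrightarrow> A $$ (i, j) = 0}"

definition kron_id :: "complex mat \<Rightarrow> nat \<Rightarrow> complex mat" where
  "kron_id A d = mat (dim_row A * d) (dim_col A * d)
     (\<lambda>(i, j). if i mod d = j mod d then A $$ (i div d, j div d) else 0)"

section \<open>The semiring \<open>\<A>\<close>, presented by lists of (G_k, d_k) meaning \<open>\<Oplus>\<^sub>k \<widehat>G_k \<otimes> C_d_k\<close>\<close>

type_synonym arep = "(graph \<times> nat) list"

definition wf_arep :: "arep \<Rightarrow> bool" where
  "wf_arep a = (\<forall>(G, d)\<in>set a. wf_graph G \<and> 1 \<le> d)"

fun arep_dim :: "arep \<Rightarrow> nat" where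
  "arep_dim [] = 0"
| "arep_dim ((G, d) # r) = fst G * d + arep_dim r"

fun arep_space :: "arep \<Rightarrow> complex mat set" where
  "arep_space [] = {0\<^sub>m 0 0}"
| "arep_space ((G, d) # r) =
     {four_block_mat (kron_id A d) (0\<^sub>m (fst G * d) (arep_dim r))
                     (0\<^sub>m (arep_dim r) (fst G * d)) B | A B. A \<in> graph_nc G \<and> B \<in> arep_space r}"

definition realize :: "arep \<Rightarrow> ncgraph" where
  "realize a = (arep_dim a, arep_space a)"

definition arep_zero :: arep where "arep_zero = []"
definition arep_one :: arep where "arep_one = [(K1, 1)]"
definition arep_add :: "arep \<Rightarrow> arep \<Rightarrow> arep" where "arep_add a b = a @ b"
definition arep_mult :: "arep \<Rightarrow> arep \<Rightarrow> arep" where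
  "arep_mult a b = concat (map (\<lambda>(G, d). map (\<lambda>(H, e). (strong_prod G H, d * e)) b) a)"

text \<open>\<open>\<Delta>(\<A>,\<le>)\<close>: nonnegative, \<open>\<le>\<close>-monotone semiring homomorphisms on \<open>\<A>\<close>
  (monotonicity in particular makes F invariant under unitary isomorphism of realizations,
  so F is a well-defined function on \<open>\<A>\<close>).\<close>
definition Delta_A :: "(arep \<Rightarrow> real) \<Rightarrow> bool" where
  "Delta_A F = (
     (\<forall>a. wf_arep a \<longrightarrow> 0 \<le> F a) \<and>
     F arep_zero = 0 \<and> F arep_one = 1 \<and>
     (\<forall>a b. wf_arep a \<longrightarrow> wf_arep b \<longrightarrow> F (arep_add a b) = F a + F b) \<and>
     (\<forall>a b. wf_arep a \<longrightarrow> wf_arep b \<longrightarrow> F (arep_mult a b) = F a * F b) \<and>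
     (\<forall>a b. wf_arep a \<longrightarrow> wf_arep b \<longrightarrow> nc_le (realize a) (realize b) \<longrightarrow> F a \<le> F b))"

definition f_alpha :: "(graph \<Rightarrow> real) \<Rightarrow> real \<Rightarrow> arep \<Rightarrow> real" where
  "f_alpha f \<alpha> a = (\<Sum>(G, d)\<leftarrow>a. f G * real d powr \<alpha>)"

end

theory Submission
  imports Defs "HOL-Real_Asymp.Real_Asymp"
begin

definition sg :: "nat \<Rightarrow> nat \<Rightarrow> int" where "sg v j = (if bit v j then -1 else 1)"
definition ip :: "nat \<Rightarrow> nat \<Rightarrow> nat \<Rightarrow> int" where "ip n v w = (\<Sum>j<n. sg v j * sg w j)"
definition mono :: "nat set \<Rightarrow> nat \<Rightarrow> int" where "mono S w = (\<Prod>j\<in>S. sg w j)"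
definition Pf :: "nat \<Rightarrow> nat \<Rightarrow> nat \<Rightarrow> nat \<Rightarrow> int" where
  "Pf n q v w = (\<Prod>i\<in>{1..q}. (int i - ip n v w))"
definition flip :: "nat set \<Rightarrow> nat \<Rightarrow> nat set" where
  "flip S j = (if j \<in> S then S - {j} else insert j S)"

lemma sg_sq[simp]: "sg w j * sg w j = 1" by (simp add: sg_def)

lemma flip_flip[simp]: "flip (flip S j) j = S"
  by (auto simp: flip_def)

lemma flip_Pow: "S \<subseteq> {..<n} \<Longrightarrow> j < n \<Longrightarrow> flip S j \<subseteq> {..<n}"
  by (auto simp: flip_def)

lemma mono_flip: assumes "finite S" shows "mono S w * sg w j = mono (flip S j) w"
proof (cases "j \<in> S")
  case True
  then have "mono S w = sg w j * mono (S - {j}) w"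
    unfolding mono_def using assms by (simp add: prod.remove)
  then show ?thesis using True by (simp add: flip_def mult.commute mult.left_commute)
next
  case False
  then show ?thesis using assms by (simp add: flip_def mono_def mult.commute)
qed

lemma card_flip: "card T \<le> Suc (card (flip T j))"
proof (cases "finite T")
  case True
  then show ?thesis by (cases "j \<in> T") (auto simp: flip_def card_insert_le)
next
  case False
  then show ?thesis by simp
qed

lemma expand:
  "\<exists>c. (\<forall>S. c S \<noteq> 0 \<longrightarrow> card S \<le> q) \<and>
       (\<forall>w. Pf n q v w = (\<Sum>S\<in>Pow {..<n}. c S * mono S w))"
proof (induction q)
  case 0
  show ?case
    by (rule exI[of _ "\<lambda>S. if S = {} then 1 else 0"])
       (auto simp: Pf_def mono_def sum.remove[of _ "{}"])
next
  case (Suc q)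
  then obtain c where c0: "\<forall>S. c S \<noteq> 0 \<longrightarrow> card S \<le> q"
    and c1: "\<forall>w. Pf n q v w = (\<Sum>S\<in>Pow {..<n}. c S * mono S w)" by blast
  define c' where "c' T = int (Suc q) * c T - (\<Sum>j<n. sg v j * c (flip T j))" for T
  have sup: "c' S \<noteq> 0 \<longrightarrow> card S \<le> Suc q" for S
  proof
    assume "c' S \<noteq> 0"
    then have "c S \<noteq> 0 \<or> (\<exists>j<n. c (flip S j) \<noteq> 0)"
      unfolding c'_def by (metis (no_types, lifting) diff_zero mult_zero_right sum.neutral lessThan_iff)
    then show "card S \<le> Suc q"
      using c0 card_flip[of S] by (meson le_SucI order_trans Suc_le_mono)
  qed
  have "Pf n (Suc q) v w = (\<Sum>S\<in>Pow {..<n}. c' S * mono S w)" for w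
  proof -
    have fl: "(\<Sum>S\<in>Pow {..<n}. c S * mono (flip S j) w) = (\<Sum>T\<in>Pow {..<n}. c (flip T j) * mono T w)"
      if j: "j < n" for j
      by (rule sum.reindex_bij_witness[of _ "\<lambda>T. flip T j" "\<lambda>T. flip T j"])
         (auto simp: flip_Pow[OF _ j])
    have "Pf n (Suc q) v w = Pf n q v w * (int (Suc q) - ip n v w)"
      unfolding Pf_def by (simp add: prod.nat_ivl_Suc' mult.commute)
    also have "\<dots> = (\<Sum>S\<in>Pow {..<n}. c S * mono S w) * int (Suc q)
        - (\<Sum>j<n. sg v j * (\<Sum>S\<in>Pow {..<n}. c S * (mono S w * sg w j)))"
      unfolding c1[rule_format] ip_def
      by (simp add: algebra_simps sum_distrib_left sum_distrib_right sum_subtractf)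
         (subst sum.swap, simp add: sum_distrib_left algebra_simps)
    also have "\<dots> = (\<Sum>S\<in>Pow {..<n}. c S * mono S w) * int (Suc q)
        - (\<Sum>j<n. sg v j * (\<Sum>T\<in>Pow {..<n}. c (flip T j) * mono T w))"
    proof -
      have "(\<Sum>S\<in>Pow {..<n}. c S * (mono S w * sg w j)) = (\<Sum>T\<in>Pow {..<n}. c (flip T j) * mono T w)"
        if "j < n" for j
        using fl[OF that] by (auto intro!: sum.cong simp: mono_flip finite_subset)
      then show ?thesis by simp
    qed
    also have "\<dots> = (\<Sum>S\<in>Pow {..<n}. c' S * mono S w)"
      unfolding c'_def
      by (simp add: algebra_simps sum_distrib_left sum_distrib_right sum_subtractf)
         (subst sum.swap, simp add: sum_distrib_left algebra_simps)
    finally show ?thesis .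
  qed
  then show ?case using sup by blast
qed

lemma ip_self: "ip n v v = int n"
  by (simp add: ip_def)

lemma offdiag:
  assumes p: "prime p" and nd: "\<not> int p dvd ip n v w"
  shows "int p dvd Pf n (p - 1) v w"
proof -
  define r where "r = ip n v w mod int p"
  have p1: "p > 1" using p prime_gt_1_nat by blast
  have r0: "r \<noteq> 0" using nd unfolding r_def by (simp add: dvd_eq_mod_eq_0)
  have rr: "0 \<le> r" "r < int p" unfolding r_def using p1 by auto
  have jin: "nat r \<in> {1..p-1}" using r0 rr by auto
  have "int p dvd (int (nat r) - ip n v w)"
  proof -
    have "int (nat r) - ip n v w = - (int p * (ip n v w div int p))"
      using rr r_def by (simp add: minus_div_mult_eq_mod[symmetric] algebra_simps)
    then show ?thesis by simp
  qed
  also have "\<dots> dvd Pf n (p - 1) v w"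
    unfolding Pf_def by (rule dvd_prodI[OF _ jin]) simp
  finally show ?thesis .
qed

lemma diag_not_dvd:
  assumes p: "prime p" and pn: "p dvd n"
  shows "\<not> int p dvd Pf n (p - 1) v v"
proof
  assume "int p dvd Pf n (p - 1) v v"
  then obtain j where j: "j \<in> {1..p-1}" and d: "int p dvd (int j - int n)"
    unfolding Pf_def ip_self using prime_dvd_prod_iff[of "{1..p-1}" "int p"] p
    by (auto simp: prime_nat_int_transfer)
  have "int p dvd int n" using pn by simp
  then have "int p dvd int j" using d by (metis dvd_diff diff_add_cancel dvd_add)
  then have "p dvd j" by simp
  moreover have "0 < j" "j < p" using j p prime_gt_1_nat by auto
  ultimately show False using nat_dvd_not_less by blast
qed

lemma FW:
  assumes p: "prime p" and pn: "p dvd n" and fin: "finite A"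
    and hyp: "\<forall>v\<in>A. \<forall>w\<in>A. v \<noteq> w \<longrightarrow> \<not> int p dvd ip n v w"
  shows "card A \<le> card {S. S \<subseteq> {..<n} \<and> card S < p}"
proof (rule ccontr)
  define Ms where "Ms = {S. S \<subseteq> {..<n} \<and> card S < p}"
  assume "\<not> card A \<le> card {S. S \<subseteq> {..<n} \<and> card S < p}"
  then have big: "card Ms < card A" unfolding Ms_def by simp
  have finMs: "finite Ms" unfolding Ms_def
    by (rule finite_subset[of _ "Pow {..<n}"]) auto
  obtain ms where ms: "set ms = Ms" "distinct ms" using finite_distinct_list[OF finMs] by blast
  define xs where "xs = sorted_list_of_set A"
  have xs: "set xs = A" "distinct xs" unfolding xs_def using fin by auto
  define k where "k = card A"
  define D where "D = length ms"
  have lk: "length xs = k" unfolding k_def using xs distinct_card by metis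
  have Dk: "D < k" unfolding D_def k_def using big ms distinct_card by metis
  have "\<forall>v. \<exists>c. (\<forall>S. c S \<noteq> 0 \<longrightarrow> card S \<le> p - 1) \<and>
       (\<forall>w. Pf n (p - 1) v w = (\<Sum>S\<in>Pow {..<n}. c S * mono S w))"
    using expand by blast
  then obtain C where C1: "\<And>v S. C v S \<noteq> 0 \<Longrightarrow> card S \<le> p - 1"
    and C2: "\<And>v w. Pf n (p - 1) v w = (\<Sum>S\<in>Pow {..<n}. C v S * mono S w)"
    by metis
  have p1: "p > 1" using p prime_gt_1_nat by blast
  have Pf_sum: "Pf n (p - 1) v w = (\<Sum>s<D. C v (ms!s) * mono (ms!s) w)" for v w
  proof -
    have "Pf n (p - 1) v w = (\<Sum>S\<in>Ms. C v S * mono S w)"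
      unfolding C2
    proof (rule sum.mono_neutral_right)
      show "finite (Pow {..<n})" by simp
      show "Ms \<subseteq> Pow {..<n}" unfolding Ms_def by auto
      show "\<forall>i\<in>Pow {..<n} - Ms. C v i * mono i w = 0"
      proof
        fix S assume "S \<in> Pow {..<n} - Ms"
        then have "\<not> card S \<le> p - 1" using p1 by (auto simp: Ms_def)
        then have "C v S = 0" using C1 by blast
        then show "C v S * mono S w = 0" by simp
      qed
    qed
    also have "\<dots> = (\<Sum>s<D. C v (ms!s) * mono (ms!s) w)"
      unfolding ms(1)[symmetric] sum.distinct_set_conv_list[OF ms(2)] D_def
      by (simp add: sum_list_sum_nth atLeast0LessThan)
    finally show ?thesis .
  qed
  define M :: "int mat" where "M = mat k k (\<lambda>(a,b). Pf n (p - 1) (xs!a) (xs!b))"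
  define U :: "int mat" where "U = mat k k (\<lambda>(a,s). if s < D then C (xs!a) (ms!s) else 0)"
  define W :: "int mat" where "W = mat k k (\<lambda>(s,b). if s < D then mono (ms!s) (xs!b) else 0)"
  have UW: "M = U * W"
  proof (rule eq_matI)
    fix a b assume a: "a < dim_row (U * W)" and b: "b < dim_col (U * W)"
    then have a': "a < k" and b': "b < k" by (auto simp: U_def W_def)
    have "(U * W) $$ (a, b) = (\<Sum>s<k. U $$ (a, s) * W $$ (s, b))"
      using a' b' by (simp add: U_def W_def scalar_prod_def atLeast0LessThan)
    also have "\<dots> = (\<Sum>s<k. if s < D then C (xs!a) (ms!s) * mono (ms!s) (xs!b) else 0)"
      using a' b' by (intro sum.cong) (auto simp: U_def W_def)
    also have "\<dots> = (\<Sum>s<D. C (xs!a) (ms!s) * mono (ms!s) (xs!b))"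
      using Dk by (intro sum.mono_neutral_cong_right) auto
    also have "\<dots> = M $$ (a, b)" using Pf_sum[of "xs!a" "xs!b"] a' b' by (simp add: M_def)
    finally show "M $$ (a, b) = (U * W) $$ (a, b)" by simp
  qed (auto simp: M_def U_def W_def)
  have detW: "det W = 0"
  proof -
    have W: "W \<in> carrier_mat k k" unfolding W_def by simp
    have "signof q * (\<Prod>i = 0..<k. W $$ (i, q i)) = 0" if "q permutes {0..<k}" for q
    proof -
      have "q D < k" using permutes_in_image[OF that] Dk by auto
      then have "W $$ (D, q D) = 0" using Dk by (simp add: W_def)
      then have "(\<Prod>i = 0..<k. W $$ (i, q i)) = 0" using Dk
        by (intro prod_zero) auto
      then show ?thesis by simp
    qed
    then show ?thesis unfolding det_def'[OF W] by (intro sum.neutral) blast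
  qed
  have UWc: "U \<in> carrier_mat k k" "W \<in> carrier_mat k k" unfolding U_def W_def by auto
  have detM0: "det M = 0" using det_mult[OF UWc] detW UW by simp
  have M: "M \<in> carrier_mat k k" unfolding M_def by simp
  define trm where "trm q = signof q * (\<Prod>i = 0..<k. M $$ (i, q i))" for q
  define Perms where "Perms = {q. q permutes {0..<k}}"
  have idP: "id \<in> Perms" unfolding Perms_def by (simp add: permutes_id)
  have finP: "finite Perms" unfolding Perms_def by (simp add: finite_permutations)
  have "det M = trm id + (\<Sum>q\<in>Perms - {id}. trm q)"
  proof -
    have "det M = sum trm Perms" unfolding det_def'[OF M] trm_def Perms_def by simp
    then show ?thesis using sum.remove[OF finP idP, of trm] by simp
  qed
  moreover have "int p dvd (\<Sum>q\<in>Perms - {id}. trm q)"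
  proof (rule dvd_sum)
    fix q assume q: "q \<in> Perms - {id}"
    then have "q \<noteq> id" by blast
    then obtain i where i: "q i \<noteq> i" by (auto simp: fun_eq_iff)
    have qp: "q permutes {0..<k}" using q Perms_def by auto
    have ik: "i < k" using i qp by (meson atLeastLessThan_iff permutes_not_in zero_le)
    have qik: "q i < k" using permutes_in_image[OF qp] ik by auto
    have "xs!i \<noteq> xs!(q i)" using nth_eq_iff_index_eq[OF xs(2)] ik qik i lk by auto
    moreover have "xs!i \<in> A" "xs!(q i) \<in> A" using ik qik lk xs(1) by auto
    ultimately have "int p dvd Pf n (p - 1) (xs!i) (xs!(q i))"
      using hyp offdiag[OF p] by blast
    then have "int p dvd M $$ (i, q i)" using ik qik by (simp add: M_def)
    also have "\<dots> dvd (\<Prod>i = 0..<k. M $$ (i, q i))" by (rule dvd_prodI) (use ik in auto)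
    finally show "int p dvd trm q" unfolding trm_def by simp
  qed
  ultimately have "trm id = - (\<Sum>q\<in>Perms - {id}. trm q)" "int p dvd (\<Sum>q\<in>Perms - {id}. trm q)"
    using detM0 by (simp_all add: eq_neg_iff_add_eq_0)
  then have "int p dvd trm id" by simp
  then have "int p dvd (\<Prod>i = 0..<k. Pf n (p - 1) (xs!i) (xs!i))"
    unfolding trm_def by (simp add: M_def)
  then obtain i where "i \<in> {0..<k}" "int p dvd Pf n (p - 1) (xs!i) (xs!i)"
    using prime_dvd_prod_iff[of "{0..<k}" "int p"] p by (auto simp: prime_nat_int_transfer)
  then show False using diag_not_dvd[OF p pn] by blast
qed


lemma card_Ms: "card {S. S \<subseteq> {..<n} \<and> card S < p} = (\<Sum>i<p. n choose i)"
proof -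
  have eq: "{S. S \<subseteq> {..<n} \<and> card S < p} = (\<Union>i<p. {S. S \<subseteq> {..<n} \<and> card S = i})" by auto
  have "card (\<Union>i<p. {S. S \<subseteq> {..<n} \<and> card S = i}) = (\<Sum>i<p. card {S. S \<subseteq> {..<n} \<and> card S = i})"
    by (rule card_UN_disjoint) (auto intro: finite_subset[of _ "Pow {..<n}"])
  also have "\<dots> = (\<Sum>i<p. n choose i)" by (simp add: n_subsets)
  finally show ?thesis using eq by simp
qed

lemma binom_bound:
  assumes "p \<le> n"
  shows "real (\<Sum>i<p. n choose i) \<le> 3^p * (4/3)^n"
proof -
  have "real (\<Sum>i<p. n choose i) = (\<Sum>i<p. real (n choose i))" by simp
  also have "\<dots> \<le> (\<Sum>i<p. real (n choose i) * (3^p * (1/3)^i))"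
  proof (rule sum_mono)
    fix i assume "i \<in> {..<p}"
    then have "(3::real)^i \<le> 3^p" by (intro power_increasing) auto
    then have "1 \<le> (3::real)^p * (1/3)^i" by (simp add: power_one_over field_simps)
    then show "real (n choose i) \<le> real (n choose i) * (3^p * (1/3)^i)"
      by (simp add: mult_le_cancel_left1)
  qed
  also have "\<dots> \<le> (\<Sum>i\<in>{..n}. real (n choose i) * (3^p * (1/3)^i))"
    by (rule sum_mono2) (use assms in auto)
  also have "\<dots> = 3^p * (\<Sum>i\<le>n. real (n choose i) * (1/3)^i * 1^(n-i))"
    by (simp add: sum_distrib_left algebra_simps)
  also have "\<dots> = 3^p * (1/3 + 1)^n" by (simp only: binomial_ring[of "1/3::real" 1 n])
  finally show ?thesis by simp
qed


definition cnt :: "nat \<Rightarrow> nat \<Rightarrow> int" where "cnt n v = (\<Sum>j<n. of_bool (bit v j))"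

lemma ip_formula:
  "ip n v w = int n - 2 * cnt n v - 2 * cnt n w + 4 * (\<Sum>j<n. of_bool (bit v j \<and> bit w j))"
proof -
  have "ip n v w = (\<Sum>j<n. 1 - 2 * of_bool (bit v j) - 2 * of_bool (bit w j) + 4 * of_bool (bit v j \<and> bit w j))"
    unfolding ip_def by (intro sum.cong) (auto simp: sg_def)
  also have "\<dots> = int n - 2 * cnt n v - 2 * cnt n w + 4 * (\<Sum>j<n. of_bool (bit v j \<and> bit w j))"
    unfolding cnt_def by (simp add: sum.distrib sum_subtractf sum_distrib_left)
  finally show ?thesis .
qed

lemma bits_high: "(v::nat) < 2^n \<Longrightarrow> n \<le> j \<Longrightarrow> \<not> bit v j"
proof
  assume "v < 2^n" "n \<le> j" "bit v j"
  then have "(2::nat)^n \<le> 2^j" by (simp add: power_increasing)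
  then have "v < 2^j" using \<open>v < 2^n\<close> by linarith
  then have "v div 2^j = 0" by (rule div_less)
  then show False using \<open>bit v j\<close> by (simp add: bit_iff_odd)
qed

lemma bits_differ: "(v::nat) < 2^n \<Longrightarrow> w < 2^n \<Longrightarrow> v \<noteq> w \<Longrightarrow> \<exists>j<n. bit v j \<noteq> bit w j"
  using bits_high by (metis bit_eq_iff not_le)

lemma ip_lt:
  assumes "v < 2^n" "w < 2^n" "v \<noteq> w"
  shows "ip n v w < int n"
proof -
  obtain j where j: "j < n" "bit v j \<noteq> bit w j" using bits_differ[OF assms] by blast
  have "ip n v w < (\<Sum>j<n. 1)" unfolding ip_def
    by (rule sum_strict_mono_ex1) (use j in \<open>auto simp: sg_def\<close>)
  then show ?thesis by simp
qed

lemma ip_gt: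
  assumes "0 < n" "bit v 0 = bit w 0"
  shows "- int n < ip n v w"
proof -
  have "(\<Sum>j<n. -1) < ip n v w" unfolding ip_def
    by (rule sum_strict_mono_ex1) (use assms in \<open>auto simp: sg_def\<close>)
  then show ?thesis by simp
qed

lemma same_class_ndvd:
  assumes p: "prime p" "3 \<le> p" and n: "n = 4 * p"
    and vw: "v < 2^n" "w < 2^n" "v \<noteq> w" and b0: "bit v 0 = bit w 0"
    and par: "even (cnt n v) = even (cnt n w)" and nz: "ip n v w \<noteq> 0"
  shows "\<not> int p dvd ip n v w"
proof
  assume pd: "int p dvd ip n v w"
  have "even (cnt n v + cnt n w)" using par by auto
  then obtain m where m: "cnt n v + cnt n w = 2 * m" by blast
  have "ip n v w = 4 * (int p - m + (\<Sum>j<n. of_bool (bit v j \<and> bit w j)))"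
    using m unfolding ip_formula n by (simp add: algebra_simps)
  then obtain t where t: "ip n v w = 4 * t" by blast
  have pr: "prime (int p)" using p by (simp add: prime_nat_int_transfer)
  have n4: "\<not> int p dvd 4"
  proof
    assume "int p dvd 4"
    then have "int p dvd 2 * 2" by simp
    then have "int p dvd 2" using pr prime_dvd_mult_iff by blast
    then have "p dvd 2" by (metis int_dvd_int_iff of_nat_numeral)
    then have "int p \<le> 2" using dvd_imp_le by fastforce
    then show False using p by simp
  qed
  have "int p dvd t" using pd t pr n4 prime_dvd_mult_iff by metis
  then have "4 * int p dvd ip n v w" using t by simp
  then have "\<bar>4 * int p\<bar> \<le> \<bar>ip n v w\<bar>" using nz dvd_imp_le_int by blast
  moreover have "ip n v w < int n" using ip_lt[OF vw] .
  moreover have "- int n < ip n v w" using ip_gt[OF _ b0, of n] n p by simp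
  ultimately show False using n by simp
qed

lemma clique_bound:
  assumes p: "prime p" "3 \<le> p" and n: "n = 4 * p"
    and A: "A \<subseteq> {..<2^n}" and cl: "\<forall>v\<in>A. \<forall>w\<in>A. v \<noteq> w \<longrightarrow> ip n v w \<noteq> 0"
  shows "card A \<le> 4 * card {S. S \<subseteq> {..<n} \<and> card S < p}"
proof -
  define Ms where "Ms = {S. S \<subseteq> {..<n} \<and> card S < p}"
  define key where "key v = (bit v 0, even (cnt n v))" for v
  define Ak where "Ak \<kappa> = {v\<in>A. key v = \<kappa>}" for \<kappa>
  have finA: "finite A" using A finite_subset by blast
  have "A = (\<Union>\<kappa>\<in>UNIV. Ak \<kappa>)" unfolding Ak_def by auto
  then have "card A \<le> (\<Sum>\<kappa>\<in>(UNIV::(bool \<times> bool) set). card (Ak \<kappa>))"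
    using card_UN_le[of "UNIV::(bool \<times> bool) set" Ak] by simp
  also have "\<dots> \<le> (\<Sum>\<kappa>\<in>(UNIV::(bool \<times> bool) set). card Ms)"
  proof (rule sum_mono)
    fix \<kappa> :: "bool \<times> bool"
    show "card (Ak \<kappa>) \<le> card Ms" unfolding Ms_def
    proof (rule FW[OF p(1)])
      show "p dvd n" using n by simp
      show "finite (Ak \<kappa>)" unfolding Ak_def using finA by simp
      show "\<forall>v\<in>Ak \<kappa>. \<forall>w\<in>Ak \<kappa>. v \<noteq> w \<longrightarrow> \<not> int p dvd ip n v w"
      proof (intro ballI impI)
        fix v w assume v: "v \<in> Ak \<kappa>" and w: "w \<in> Ak \<kappa>" and vw: "v \<noteq> w"
        then have "key v = key w" "v \<in> A" "w \<in> A" unfolding Ak_def by auto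
        then show "\<not> int p dvd ip n v w"
          using same_class_ndvd[OF p n, of v w] A vw cl unfolding key_def by auto
      qed
    qed
  qed
  also have "\<dots> = 4 * card Ms" by (simp add: card_UNIV_bool)
  finally show ?thesis unfolding Ms_def .
qed


lemma frac_lower:
  assumes m: "0 < m" and bnd: "\<forall>I\<in>indep_sets (gcompl (N, E)). card I \<le> m"
  shows "real N / real m \<le> frac_chromatic (gcompl (N, E))"
proof -
  define H where "H = gcompl (N, E)"
  have fH: "fst H = N" unfolding H_def gcompl_def by simp
  have sH: "\<not> snd H v v" for v unfolding H_def gcompl_def by simp
  define X where "X = {(\<Sum>I\<in>indep_sets H. (w I :: real)) | w.
      (\<forall>I. 0 \<le> w I) \<and> (\<forall>v < fst H. 1 \<le> (\<Sum>I\<in>{I\<in>indep_sets H. v \<in> I}. w I))}"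
  have finI: "finite (indep_sets H)" unfolding indep_sets_def
    by (rule finite_subset[of _ "Pow {..<fst H}"]) auto
  have single: "{v} \<in> indep_sets H" if "v < N" for v
    using that sH fH unfolding indep_sets_def by auto
  have ne: "X \<noteq> {}"
  proof -
    have "1 \<le> (\<Sum>I\<in>{I\<in>indep_sets H. v \<in> I}. (1::real))" if "v < fst H" for v
    proof -
      have "{v} \<in> {I\<in>indep_sets H. v \<in> I}" using single that fH by auto
      then have "{I\<in>indep_sets H. v \<in> I} \<noteq> {}" by blast
      moreover have "finite {I\<in>indep_sets H. v \<in> I}" using finI by simp
      ultimately show ?thesis by (simp add: Suc_leI card_gt_0_iff)
    qed
    then have "(\<Sum>I\<in>indep_sets H. (1::real)) \<in> X" unfolding X_def
      by (intro CollectI exI[of _ "\<lambda>_. 1"]) auto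
    then show ?thesis by blast
  qed
  have lb: "real N / real m \<le> x" if "x \<in> X" for x
  proof -
    obtain w where x: "x = (\<Sum>I\<in>indep_sets H. w I)" and w0: "\<forall>I. 0 \<le> w I"
      and wf: "\<forall>v < fst H. 1 \<le> (\<Sum>I\<in>{I\<in>indep_sets H. v \<in> I}. w I)"
      using \<open>x \<in> X\<close> unfolding X_def by blast
    have "real N = (\<Sum>v<N. (1::real))" by simp
    also have "\<dots> \<le> (\<Sum>v<N. (\<Sum>I\<in>{I\<in>indep_sets H. v \<in> I}. w I))"
      using wf fH by (intro sum_mono) auto
    also have "\<dots> = (\<Sum>v<N. (\<Sum>I\<in>indep_sets H. if v \<in> I then w I else 0))"
      using finI by (simp add: sum.inter_filter)
    also have "\<dots> = (\<Sum>I\<in>indep_sets H. (\<Sum>v<N. if v \<in> I then w I else 0))"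
      by (rule sum.swap)
    also have "\<dots> = (\<Sum>I\<in>indep_sets H. w I * real (card I))"
    proof (rule sum.cong)
      fix I assume I: "I \<in> indep_sets H"
      then have sub: "I \<subseteq> {..<N}" using fH unfolding indep_sets_def by auto
      have "(\<Sum>v<N. if v \<in> I then w I else 0) = (\<Sum>v\<in>{v\<in>{..<N}. v \<in> I}. w I)"
        by (rule sum.inter_filter[symmetric]) simp
      also have "{v\<in>{..<N}. v \<in> I} = I" using sub by auto
      finally show "(\<Sum>v<N. if v \<in> I then w I else 0) = w I * real (card I)" by simp
    qed simp
    also have "\<dots> \<le> (\<Sum>I\<in>indep_sets H. w I * real m)"
      using bnd w0 unfolding H_def[symmetric] by (intro sum_mono mult_left_mono) auto
    also have "\<dots> = real m * x" unfolding x by (simp add: sum_distrib_left mult.commute)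
    finally show ?thesis using m by (simp add: divide_le_eq mult.commute)
  qed
  have "real N / real m \<le> Inf X" by (rule cInf_greatest[OF ne lb])
  then show ?thesis unfolding frac_chromatic_def X_def H_def .
qed


lemma adj_dims[simp]: "dim_row (mat_adjoint A) = dim_col A" "dim_col (mat_adjoint A) = dim_row A"
  unfolding mat_adjoint_def by (simp_all add: mat_of_rows_def)

lemma adj_index[simp]: "i < dim_col A \<Longrightarrow> j < dim_row A \<Longrightarrow> mat_adjoint A $$ (i, j) = conjugate (A $$ (j, i))"
  unfolding mat_adjoint_def by (simp add: mat_of_rows_def)

lemma msl:
  assumes "\<forall>M\<in>set Ms. M \<in> carrier_mat m m"
  shows "mat_sum_list m Ms \<in> carrier_mat m m \<and>
    (\<forall>i<m. \<forall>j<m. mat_sum_list m Ms $$ (i, j) = sum_list (map (\<lambda>M. M $$ (i, j)) Ms))"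
  using assms
proof (induction Ms)
  case Nil
  then show ?case by (simp add: mat_sum_list_def)
next
  case (Cons M Ms)
  then have M: "M \<in> carrier_mat m m" and IH: "mat_sum_list m Ms \<in> carrier_mat m m"
    "\<forall>i<m. \<forall>j<m. mat_sum_list m Ms $$ (i, j) = sum_list (map (\<lambda>M. M $$ (i, j)) Ms)" by auto
  have eq: "mat_sum_list m (M # Ms) = M + mat_sum_list m Ms" by (simp add: mat_sum_list_def)
  show ?case unfolding eq using M IH by auto
qed

lemma fb_id1:
  assumes "M \<in> carrier_mat N N"
  shows "four_block_mat (kron_id M 1) (0\<^sub>m (N * 1) 0) (0\<^sub>m 0 (N * 1)) (0\<^sub>m 0 0) = M"
  using assms by (intro eq_matI) (auto simp: four_block_mat_def kron_id_def Let_def)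

lemma fb_K1:
  assumes "A \<in> carrier_mat 1 1"
  shows "four_block_mat (kron_id A n) (0\<^sub>m (1 * n) 0) (0\<^sub>m 0 (1 * n)) (0\<^sub>m 0 0) = A $$ (0,0) \<cdot>\<^sub>m 1\<^sub>m n"
  using assms by (intro eq_matI) (auto simp: four_block_mat_def kron_id_def Let_def)


definition Ek :: "nat \<Rightarrow> nat \<Rightarrow> (nat \<Rightarrow> nat \<Rightarrow> real) \<Rightarrow> nat \<Rightarrow> complex mat" where
  "Ek n N u x = mat n N (\<lambda>(j, k). if k = x then complex_of_real (u x j) else 0)"

definition Pm :: "nat \<Rightarrow> nat \<Rightarrow> (nat \<Rightarrow> nat \<Rightarrow> real) \<Rightarrow> nat \<Rightarrow> nat \<Rightarrow> complex mat" where
  "Pm n N u x y = mat N N (\<lambda>(k, l). if k = x \<and> l = y then complex_of_real (\<Sum>j<n. u x j * u y j) else 0)"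

lemma Ek_prod: "mat_adjoint (Ek n N u x) * Ek n N u y = Pm n N u x y"
proof (rule eq_matI)
  fix k l assume "k < dim_row (Pm n N u x y)" "l < dim_col (Pm n N u x y)"
  then have kl: "k < N" "l < N" by (auto simp: Pm_def)
  have "(mat_adjoint (Ek n N u x) * Ek n N u y) $$ (k, l)
      = (\<Sum>j<n. cnj (Ek n N u x $$ (j, k)) * Ek n N u y $$ (j, l))"
    using kl by (simp add: Ek_def scalar_prod_def atLeast0LessThan)
  also have "\<dots> = (\<Sum>j<n. if k = x \<and> l = y then complex_of_real (u x j * u y j) else 0)"
    using kl by (intro sum.cong) (auto simp: Ek_def)
  also have "\<dots> = Pm n N u x y $$ (k, l)"
    using kl by (cases "k = x \<and> l = y"; auto simp: Pm_def)
  finally show "(mat_adjoint (Ek n N u x) * Ek n N u y) $$ (k, l) = Pm n N u x y $$ (k, l)" .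
qed (auto simp: Pm_def Ek_def)

lemma nc_construct:
  fixes u :: "nat \<Rightarrow> nat \<Rightarrow> real"
  assumes unit: "\<forall>x<N. (\<Sum>j<n. u x j * u x j) = 1"
    and orth: "\<forall>x<N. \<forall>y<N. \<not> gsim G x y \<longrightarrow> (\<Sum>j<n. u x j * u y j) = 0"
    and GN: "fst G = N"
  shows "nc_le (realize [(G, 1)]) (realize [(K1, n)])"
proof -
  define Es where "Es = map (Ek n N u) [0..<N]"
  have car: "\<forall>E\<in>set Es. E \<in> carrier_mat n N" unfolding Es_def Ek_def by auto
  have sum1: "mat_sum_list N (map (\<lambda>E. mat_adjoint E * E) Es) = 1\<^sub>m N"
  proof -
    have mm: "map (\<lambda>E. mat_adjoint E * E) Es = map (\<lambda>x. Pm n N u x x) [0..<N]"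
      unfolding Es_def by (simp add: Ek_prod)
    have c: "\<forall>M\<in>set (map (\<lambda>x. Pm n N u x x) [0..<N]). M \<in> carrier_mat N N"
      by (auto simp: Pm_def)
    note L = msl[OF c]
    show ?thesis unfolding mm
    proof (rule eq_matI)
      fix k l assume "k < dim_row (1\<^sub>m N)" "l < dim_col (1\<^sub>m N)"
      then have kl: "k < N" "l < N" by auto
      have "mat_sum_list N (map (\<lambda>x. Pm n N u x x) [0..<N]) $$ (k, l)
          = (\<Sum>x\<in>{0..<N}. Pm n N u x x $$ (k, l))"
        using L kl by (simp add: sum_set_upt_conv_sum_list_nat[symmetric] comp_def)
      also have "\<dots> = (\<Sum>x\<in>{0..<N}. if x = k then (if k = l then complex_of_real (\<Sum>j<n. u k j * u k j) else 0) else 0)"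
        using kl by (intro sum.cong) (auto simp: Pm_def)
      also have "\<dots> = (if k = l then 1 else 0)"
        using kl unit by (simp add: sum.delta)
      also have "\<dots> = 1\<^sub>m N $$ (k, l)" using kl by simp
      finally show "mat_sum_list N (map (\<lambda>x. Pm n N u x x) [0..<N]) $$ (k, l) = 1\<^sub>m N $$ (k, l)" .
    qed (use L in auto)
  qed
  have memb: "mat_adjoint E * X * E' \<in> arep_space [(G, 1)]"
    if E: "E \<in> set Es" and E': "E' \<in> set Es" and X: "X \<in> arep_space [(K1, n)]" for E E' X
  proof -
    obtain x y where xy: "x < N" "y < N" "E = Ek n N u x" "E' = Ek n N u y"
      using E E' unfolding Es_def by auto
    obtain A where A: "A \<in> graph_nc K1" and XA: "X = A $$ (0,0) \<cdot>\<^sub>m 1\<^sub>m n"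
      using X fb_K1 by (auto simp: graph_nc_def K1_def)
    define c where "c = A $$ (0,0)"
    have Ec: "E \<in> carrier_mat n N" "E' \<in> carrier_mat n N" using xy by (auto simp: Ek_def)
    have "mat_adjoint E * X * E' = c \<cdot>\<^sub>m (mat_adjoint E * E')"
    proof -
      have aE: "mat_adjoint E \<in> carrier_mat N n" using Ec by auto
      have "mat_adjoint E * X = c \<cdot>\<^sub>m mat_adjoint E"
        unfolding XA c_def using mult_smult_distrib[OF aE one_carrier_mat] right_mult_one_mat[OF aE] by simp
      then show ?thesis using aE Ec by (simp add: mult_smult_assoc_mat)
    qed
    also have "\<dots> = c \<cdot>\<^sub>m Pm n N u x y" using xy by (simp add: Ek_prod)
    finally have eq: "mat_adjoint E * X * E' = c \<cdot>\<^sub>m Pm n N u x y" .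
    define M where "M = c \<cdot>\<^sub>m Pm n N u x y"
    have Mc: "M \<in> carrier_mat N N" unfolding M_def Pm_def by simp
    have Mg: "M \<in> graph_nc G"
      unfolding graph_nc_def GN using Mc orth xy by (auto simp: M_def Pm_def)
    have "M = four_block_mat (kron_id M 1) (0\<^sub>m (N * 1) 0) (0\<^sub>m 0 (N * 1)) (0\<^sub>m 0 0)"
      using fb_id1[OF Mc] by simp
    then show ?thesis unfolding eq M_def[symmetric] using Mg GN by auto
  qed
  have R1: "realize [(G,1)] = (N, arep_space [(G,1)])" by (simp add: realize_def GN)
  have R2: "realize [(K1,n)] = (n, arep_space [(K1,n)])" by (simp add: realize_def K1_def)
  show ?thesis
    unfolding nc_le_def R1 R2 prod.case
    using car sum1 memb by blast
qed

lemma pw_A: "(2::real)^(4*p) = 16^p" by (simp add: power_mult)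
lemma pw_B: "(3::real)^p * (4/3)^(4*p) = (256/27)^p"
proof -
  have "(4/3::real)^4 = 256/81" by (simp add: power_divide)
  then have "(4/3::real)^(4*p) = (256/81)^p" by (simp only: power_mult)
  then have "(3::real)^p * (4/3)^(4*p) = (3 * (256/81))^p" by (simp only: power_mult_distrib)
  then show ?thesis by simp
qed
lemma pw_C: "(27/16::real)^p * (256/27)^p = 16^p"
proof -
  have "(27/16::real)^p * (256/27)^p = (27/16 * (256/27))^p" by (simp only: power_mult_distrib)
  then show ?thesis by simp
qed

lemma wf_K1: "wf_graph K1" by (simp add: wf_graph_def K1_def)

theorem proposition3p6:
  shows "\<not> (\<exists>\<alpha>::real. 1 \<le> \<alpha> \<and> Delta_A (f_alpha frac_clique_cover \<alpha>))"
proof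
  assume "\<exists>\<alpha>::real. 1 \<le> \<alpha> \<and> Delta_A (f_alpha frac_clique_cover \<alpha>)"
  then obtain \<alpha> :: real where \<alpha>: "1 \<le> \<alpha>" and D: "Delta_A (f_alpha frac_clique_cover \<alpha>)" by blast
  define F where "F = f_alpha frac_clique_cover \<alpha>"
  have F1: "F arep_one = 1" using D unfolding Delta_A_def F_def by blast
  have Fmono: "\<And>a b. wf_arep a \<Longrightarrow> wf_arep b \<Longrightarrow> nc_le (realize a) (realize b) \<Longrightarrow> F a \<le> F b"
    using D unfolding Delta_A_def F_def by blast
  have fK1: "frac_clique_cover K1 = 1" using F1 by (simp add: F_def f_alpha_def arep_one_def)
  have "eventually (\<lambda>x::real. 4 * (4*x) powr \<alpha> < (27/16) powr x) at_top" by real_asymp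
  then obtain X0 where X0: "\<And>x. x \<ge> X0 \<Longrightarrow> 4 * (4*x) powr \<alpha> < (27/16) powr x"
    by (auto simp: eventually_at_top_linorder)
  obtain p where p: "prime p" "max 3 (nat \<lceil>X0\<rceil>) < p" using bigger_prime by blast
  have p3: "3 \<le> p" using p by simp
  have pX: "X0 \<le> real p" using p(2) by linarith
  have key: "4 * (4 * real p) powr \<alpha> < (27/16)^p"
    using X0[OF pX] by (simp add: powr_realpow)
  define n where "n = 4 * p"
  define N where "N = (2::nat)^n"
  define E where "E = (\<lambda>i j. i < N \<and> j < N \<and> i \<noteq> j \<and> ip n i j \<noteq> 0)"
  define G where "G = (N, E)"
  define Ms where "Ms = {S. S \<subseteq> {..<n} \<and> card S < p}"
  have npos: "0 < n" unfolding n_def using p3 by simp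
  have ipsym: "ip n i j = ip n j i" for i j unfolding ip_def by (simp add: mult.commute)
  have wfG: "wf_graph G" unfolding wf_graph_def G_def E_def using ipsym by auto
  define u where "u x j = real_of_int (sg x j) / sqrt (real n)" for x j
  have uu: "(\<Sum>j<n. u x j * u y j) = real_of_int (ip n x y) / real n" for x y
  proof -
    have "(\<Sum>j<n. u x j * u y j) = (\<Sum>j<n. real_of_int (sg x j * sg y j) / real n)"
      unfolding u_def using npos by (intro sum.cong) (auto simp: real_sqrt_mult[symmetric])
    also have "\<dots> = real_of_int (ip n x y) / real n" unfolding ip_def
      by (simp add: sum_divide_distrib)
    finally show ?thesis .
  qed
  have unit: "\<forall>x<N. (\<Sum>j<n. u x j * u x j) = 1"
    using npos by (simp add: uu ip_self)
  have orth: "\<forall>x<N. \<forall>y<N. \<not> gsim G x y \<longrightarrow> (\<Sum>j<n. u x j * u y j) = 0"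
    by (auto simp: uu gsim_def G_def E_def)
  have nc: "nc_le (realize [(G, 1)]) (realize [(K1, n)])"
    by (rule nc_construct[OF unit orth]) (simp add: G_def)
  have wa: "wf_arep [(G, 1)]" using wfG by (simp add: wf_arep_def)
  have wb: "wf_arep [(K1, n)]" using wf_K1 npos by (simp add: wf_arep_def)
  have le: "F [(G, 1)] \<le> F [(K1, n)]" using Fmono[OF wa wb nc] .
  have FG: "F [(G, 1)] = frac_clique_cover G" by (simp add: F_def f_alpha_def)
  have FK: "F [(K1, n)] = real n powr \<alpha>" by (simp add: F_def f_alpha_def fK1)
  have finMs: "finite Ms" unfolding Ms_def
    by (rule finite_subset[of _ "Pow {..<n}"]) auto
  have Ms_pos: "0 < card Ms"
  proof -
    have "{} \<in> Ms" unfolding Ms_def using p3 by simp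
    then show ?thesis using finMs card_gt_0_iff by blast
  qed
  have bnd: "\<forall>I\<in>indep_sets (gcompl (N, E)). card I \<le> 4 * card Ms"
  proof
    fix I assume I: "I \<in> indep_sets (gcompl (N, E))"
    then have sub: "I \<subseteq> {..<N}" and nadj: "\<forall>i\<in>I. \<forall>j\<in>I. i \<noteq> j \<longrightarrow> E i j"
      unfolding indep_sets_def gcompl_def by auto
    have "\<forall>v\<in>I. \<forall>w\<in>I. v \<noteq> w \<longrightarrow> ip n v w \<noteq> 0" using nadj unfolding E_def by blast
    then show "card I \<le> 4 * card Ms"
      using clique_bound[OF p(1) p3 n_def, of I] sub unfolding Ms_def N_def by blast
  qed
  have lower: "real N / real (4 * card Ms) \<le> frac_clique_cover G"
    unfolding frac_clique_cover_def G_def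
    by (rule frac_lower) (use bnd Ms_pos in auto)
  have cMs: "real (card Ms) \<le> (256/27)^p"
  proof -
    have "real (card Ms) \<le> 3^p * (4/3)^n"
      unfolding Ms_def card_Ms by (rule binom_bound) (simp add: n_def)
    then show ?thesis by (simp add: n_def pw_B)
  qed
  have RN: "real N = 16^p" unfolding N_def n_def by (simp add: pw_A)
  have "real n powr \<alpha> * real (4 * card Ms) \<le> (4 * real p) powr \<alpha> * (4 * (256/27)^p)"
    using cMs by (simp add: n_def mult_left_mono)
  also have "\<dots> < (27/16)^p * (256/27)^p"
    using key by (simp add: mult.assoc[symmetric])
  also have "\<dots> = real N" using pw_C RN by simp
  finally have "real n powr \<alpha> < real N / real (4 * card Ms)"
    using Ms_pos by (simp add: pos_less_divide_eq)
  then show False using lower le FG FK by linarith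
qed

end
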